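(* Let $A\in\mathbb{R}^{d\times n}$ (with $n>d$) have nonzero columns $a_1,\dots,a_n$, and let $\tilde A=[A,-A]$ with columns $\tilde a_1,\dots,\tilde a_{2n}$ (so $\tilde a_j=a_j$ and $\tilde a_{n+j}=-a_j$). Let $x_0\in\mathbb{R}^n$ with support $S=\{i:(x_0)_i\neq 0\}$. Let $x_{\mathrm{opt}}\in\mathbb{R}^{|S|}$ be the vector of nonzero entries of $x_0$ and $A_{\mathrm{opt}}$ the matrix of the corresponding columns $a_i$, $i\in S$. Define $\tilde x_0\in\mathbb{R}^{2n}$ by $(\tilde x_0)_i=\max((x_0)_i,0)$ and $(\tilde x_0)_{n+i}=\max(-(x_0)_i,0)$ for $1\le i\le n$, let $\tilde S=\{j:(\tilde x_0)_j>0\}$, and let $\tilde A_{\mathrm{opt}}$ be the matrix of the columns $\tilde a_j$, $j\in\tilde S$. Then for a vector $c\in\mathbb{R}^d$ the following are equivalent: (i) $A_{\mathrm{opt}}$ has full column rank, $A_{\mathrm{opt}}^Tc=\operatorname{sign}(x_{\mathrm{opt}})$, and $|a_j^Tc|<1$ for all $j\notin S$; (ii) $\tilde A_{\mathrm{opt}}$ has full column rank, $\tilde a_j^Tc=1$ for all $j\in\tilde S$, and $\tilde a_j^Tc<1$ for all $j\in\{1,\dots,2n\}\setminus\tilde S$.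
   Context: $\operatorname{sign}$ is applied componentwise. *)

theory Defs
  imports "HOL-Analysis.Analysis"
begin

text \<open>Columns of a matrix are given as an indexed family cols :: nat => real^'d.\<close>
definition full_column_rank :: "(nat \<Rightarrow> real^'d) \<Rightarrow> nat set \<Rightarrow> bool" where
  "full_column_rank cols I \<longleftrightarrow> dim (span (cols ` I)) = card I"

text \<open>Columns of [A, -A] (0-indexed: j < n gives a_j, n <= j < 2n gives -a_(j-n)).\<close>
definition tilde_col :: "nat \<Rightarrow> (nat \<Rightarrow> real^'d) \<Rightarrow> nat \<Rightarrow> real^'d" where
  "tilde_col n a j = (if j < n then a j else - a (j - n))"

definition tilde_x :: "nat \<Rightarrow> (nat \<Rightarrow> real) \<Rightarrow> nat \<Rightarrow> real" where
  "tilde_x n x j = (if j < n then max (x j) 0 else max (- x (j - n)) 0)"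

definition supp :: "nat \<Rightarrow> (nat \<Rightarrow> real) \<Rightarrow> nat set" where
  "supp n x = {i. i < n \<and> x i \<noteq> 0}"

definition tilde_supp :: "nat \<Rightarrow> (nat \<Rightarrow> real) \<Rightarrow> nat set" where
  "tilde_supp n x = {j. j < 2 * n \<and> tilde_x n x j > 0}"

end

theory Submission
  imports Defs
begin

lemma tsupp_iff: "j \<in> tilde_supp n x \<longleftrightarrow> (j < n \<and> x j > 0) \<or> (n \<le> j \<and> j < 2*n \<and> x (j - n) < 0)"
  unfolding tilde_supp_def tilde_x_def by auto

lemma card_eq: "card (tilde_supp n x) = card (supp n x)"
proof -
  have "bij_betw (\<lambda>i. if x i > 0 then i else n + i) (supp n x) (tilde_supp n x)"
    by (rule bij_betw_byWitness[where f'="\<lambda>j. if j < n then j else j - n"])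
       (auto simp: supp_def tsupp_iff)
  then show ?thesis by (simp add: bij_betw_same_card)
qed

lemma span_eq': "span (tilde_col n a ` tilde_supp n x) = span (a ` supp n x)"
proof (subst span_eq, intro conjI)
  show "tilde_col n a ` tilde_supp n x \<subseteq> span (a ` supp n x)"
  proof
    fix v assume "v \<in> tilde_col n a ` tilde_supp n x"
    then obtain j where j: "j \<in> tilde_supp n x" "v = tilde_col n a j" by auto
    show "v \<in> span (a ` supp n x)"
    proof (cases "j < n")
      case True
      then have "j \<in> supp n x" using j by (auto simp: tsupp_iff supp_def)
      then show ?thesis using j True by (auto simp: tilde_col_def intro: span_base)
    next
      case False
      then have "j - n \<in> supp n x" using j by (auto simp: tsupp_iff supp_def)
      then have "a (j - n) \<in> span (a ` supp n x)" by (auto intro: span_base)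
      then show ?thesis using j False by (auto simp: tilde_col_def intro: span_neg)
    qed
  qed
  show "a ` supp n x \<subseteq> span (tilde_col n a ` tilde_supp n x)"
  proof
    fix v assume "v \<in> a ` supp n x"
    then obtain i where i: "i \<in> supp n x" "v = a i" by auto
    show "v \<in> span (tilde_col n a ` tilde_supp n x)"
    proof (cases "x i > 0")
      case True
      then have "i \<in> tilde_supp n x" "tilde_col n a i = a i" using i
        by (auto simp: tsupp_iff supp_def tilde_col_def)
      then show ?thesis using i by (metis image_eqI span_base)
    next
      case False
      then have "n + i \<in> tilde_supp n x" "tilde_col n a (n + i) = - a i" using i
        by (auto simp: tsupp_iff supp_def tilde_col_def)
      then have "- a i \<in> span (tilde_col n a ` tilde_supp n x)" by (metis image_eqI span_base)
      then show ?thesis using i span_neg by fastforce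
    qed
  qed
qed

theorem lemma2:
  fixes n :: nat and a :: "nat \<Rightarrow> real^'d" and x0 :: "nat \<Rightarrow> real" and c :: "real^'d"
  assumes "n > CARD('d)"
    and "\<forall>i<n. a i \<noteq> 0"
  shows "(full_column_rank a (supp n x0)
          \<and> (\<forall>i\<in>supp n x0. a i \<bullet> c = sgn (x0 i))
          \<and> (\<forall>j<n. j \<notin> supp n x0 \<longrightarrow> \<bar>a j \<bullet> c\<bar> < 1))
     \<longleftrightarrow>
         (full_column_rank (tilde_col n a) (tilde_supp n x0)
          \<and> (\<forall>j\<in>tilde_supp n x0. tilde_col n a j \<bullet> c = 1)
          \<and> (\<forall>j<2 * n. j \<notin> tilde_supp n x0 \<longrightarrow> tilde_col n a j \<bullet> c < 1))"
proof -
  have R: "full_column_rank (tilde_col n a) (tilde_supp n x0) = full_column_rank a (supp n x0)"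
    unfolding full_column_rank_def span_eq' card_eq ..
  have C: "((\<forall>i\<in>supp n x0. a i \<bullet> c = sgn (x0 i))
          \<and> (\<forall>j<n. j \<notin> supp n x0 \<longrightarrow> \<bar>a j \<bullet> c\<bar> < 1)) \<longleftrightarrow>
          ((\<forall>j\<in>tilde_supp n x0. tilde_col n a j \<bullet> c = 1)
          \<and> (\<forall>j<2 * n. j \<notin> tilde_supp n x0 \<longrightarrow> tilde_col n a j \<bullet> c < 1))"
  proof
    assume L: "(\<forall>i\<in>supp n x0. a i \<bullet> c = sgn (x0 i))
          \<and> (\<forall>j<n. j \<notin> supp n x0 \<longrightarrow> \<bar>a j \<bullet> c\<bar> < 1)"
    have A: "\<And>i. i < n \<Longrightarrow> x0 i > 0 \<Longrightarrow> a i \<bullet> c = 1"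
      using L by (auto simp: supp_def)
    have B: "\<And>i. i < n \<Longrightarrow> x0 i < 0 \<Longrightarrow> a i \<bullet> c = -1"
      using L by (auto simp: supp_def)
    have Z: "\<And>i. i < n \<Longrightarrow> x0 i = 0 \<Longrightarrow> \<bar>a i \<bullet> c\<bar> < 1"
      using L by (auto simp: supp_def)
    show "(\<forall>j\<in>tilde_supp n x0. tilde_col n a j \<bullet> c = 1)
          \<and> (\<forall>j<2 * n. j \<notin> tilde_supp n x0 \<longrightarrow> tilde_col n a j \<bullet> c < 1)"
    proof (intro conjI allI ballI impI)
      fix j assume "j \<in> tilde_supp n x0"
      then show "tilde_col n a j \<bullet> c = 1"
        using A B by (auto simp: tsupp_iff tilde_col_def)
    next
      fix j assume j: "j < 2*n" "j \<notin> tilde_supp n x0"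
      show "tilde_col n a j \<bullet> c < 1"
      proof (cases "j < n")
        case True
        have x: "x0 j \<le> 0" using j True by (auto simp: tsupp_iff)
        have "a j \<bullet> c < 1"
        proof (cases "x0 j = 0")
          case True
          then show ?thesis using Z[of j] \<open>j < n\<close> by linarith
        next
          case False
          then show ?thesis using B[of j] \<open>j < n\<close> x by simp
        qed
        then show ?thesis using True by (simp add: tilde_col_def)
      next
        case False
        have i: "j - n < n" using j by simp
        have x: "x0 (j-n) \<ge> 0" using j False by (auto simp: tsupp_iff)
        have "- (a (j-n) \<bullet> c) < 1"
        proof (cases "x0 (j-n) = 0")
          case True
          then show ?thesis using Z[OF i] by linarith
        next
          case False
          then show ?thesis using A[OF i] x by simp
        qed
        then show ?thesis using False by (simp add: tilde_col_def)
      qed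
    qed
  next
    assume L: "(\<forall>j\<in>tilde_supp n x0. tilde_col n a j \<bullet> c = 1)
          \<and> (\<forall>j<2 * n. j \<notin> tilde_supp n x0 \<longrightarrow> tilde_col n a j \<bullet> c < 1)"
    have P: "\<And>i. i < n \<Longrightarrow> (x0 i > 0 \<longrightarrow> a i \<bullet> c = 1) \<and> (x0 i \<le> 0 \<longrightarrow> a i \<bullet> c < 1)"
    proof -
      fix i assume "i < n"
      then show "(x0 i > 0 \<longrightarrow> a i \<bullet> c = 1) \<and> (x0 i \<le> 0 \<longrightarrow> a i \<bullet> c < 1)"
      proof (intro conjI impI)
        assume "x0 i > 0"
        then have "i \<in> tilde_supp n x0" using \<open>i < n\<close> by (simp add: tsupp_iff)
        then have "tilde_col n a i \<bullet> c = 1" using L by blast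
        then show "a i \<bullet> c = 1" using \<open>i < n\<close> by (simp add: tilde_col_def)
      next
        assume "x0 i \<le> 0"
        then have "i \<notin> tilde_supp n x0" using \<open>i < n\<close> by (simp add: tsupp_iff)
        moreover have "i < 2*n" using \<open>i < n\<close> by simp
        ultimately have "tilde_col n a i \<bullet> c < 1" using L by blast
        then show "a i \<bullet> c < 1" using \<open>i < n\<close> by (simp add: tilde_col_def)
      qed
    qed
    have N: "\<And>i. i < n \<Longrightarrow> (x0 i < 0 \<longrightarrow> a i \<bullet> c = -1) \<and> (x0 i \<ge> 0 \<longrightarrow> - (a i \<bullet> c) < 1)"
    proof -
      fix i assume i: "i < n"
      have f1: "n + i \<in> tilde_supp n x0 \<longleftrightarrow> x0 i < 0" using i by (auto simp: tsupp_iff)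
      have f2: "tilde_col n a (n+i) \<bullet> c = - (a i \<bullet> c)" by (simp add: tilde_col_def)
      have f3: "n + i < 2*n" using i by simp
      show "(x0 i < 0 \<longrightarrow> a i \<bullet> c = -1) \<and> (x0 i \<ge> 0 \<longrightarrow> - (a i \<bullet> c) < 1)"
        proof (intro conjI impI)
        assume "x0 i < 0"
        then have "tilde_col n a (n+i) \<bullet> c = 1" using L f1 f2 f3 by blast
        then show "a i \<bullet> c = -1" using f1 f2 f3 by simp
      next
        assume "x0 i \<ge> 0"
        then have "n + i \<notin> tilde_supp n x0" using f1 f2 f3 by simp
        then have "tilde_col n a (n+i) \<bullet> c < 1" using L f1 f2 f3 by blast
        then show "- (a i \<bullet> c) < 1" using f1 f2 f3 by simp
      qed
    qed
    show "(\<forall>i\<in>supp n x0. a i \<bullet> c = sgn (x0 i))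
          \<and> (\<forall>j<n. j \<notin> supp n x0 \<longrightarrow> \<bar>a j \<bullet> c\<bar> < 1)"
    proof (intro conjI allI ballI impI)
      fix i assume "i \<in> supp n x0"
      then show "a i \<bullet> c = sgn (x0 i)" using P[of i] N[of i]
        by (auto simp: supp_def sgn_if)
    next
      fix j assume "j < n" "j \<notin> supp n x0"
      then show "\<bar>a j \<bullet> c\<bar> < 1" using P[of j] N[of j] by (auto simp: supp_def)
    qed
  qed
  show ?thesis using R C by blast
qed

end
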